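(* Let $(X,d)$ be a compact metric space and $\emptyset\neq F\subseteq X$ with a representation $(\tilde F_k)$ w.r.t. which $F$ is explicitly closed. Let $G,H:\mathbb{R}_+\to\mathbb{R}_+$ satisfy properties (G) and (H). Assume that the sequence $(x_n)$ in $X$ is $(G,H)$-Fej\'er monotone with respect to $F$ and has approximate $F$-points. Then $(x_n)$ converges to a point $x\in F$.
   Context: A representation of $F$ is a family $(\tilde F_k)_{k\in\mathbb{N}}$ of subsets of $X$ with $F=\bigcap_k\tilde F_k$; $AF_k:=\bigcap_{l\le k}\tilde F_l$. $(x_n)$ has approximate $F$-points if for all $k$ there is $N$ with $x_N\in AF_k$. $F$ is explicitly closed if for every $p\in X$: if $AF_M\cap\overline B(p,1/(N+1))\ne\emptyset$ for all $N,M\in\mathbb{N}$, then $p\in F$. Property (G): $a_n\to0$ implies $G(a_n)\to0$ for all sequences $(a_n)$ in $\mathbb{R}_+$; property (H): $H(a_n)\to0$ implies $a_n\to0$ for all sequences $(a_n)$ in $\mathbb{R}_+$. $(x_n)$ is $(G,H)$-Fej\'er monotone w.r.t. $F$ if $H(d(x_{n+m},p))\le G(d(x_n,p))$ for all $n,m\in\mathbb{N}$, $p\in F$. *)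

theory Defs
  imports "HOL-Analysis.Analysis"
begin

definition is_representation :: "'a set \<Rightarrow> 'a set \<Rightarrow> (nat \<Rightarrow> 'a set) \<Rightarrow> bool" where
  "is_representation X F Ft \<longleftrightarrow> (\<forall>k. Ft k \<subseteq> X) \<and> F = (\<Inter>k. Ft k)"

definition AF :: "(nat \<Rightarrow> 'a set) \<Rightarrow> nat \<Rightarrow> 'a set" where
  "AF Ft k = (\<Inter>l\<in>{..k}. Ft l)"

definition has_approx_F_points :: "(nat \<Rightarrow> 'a set) \<Rightarrow> (nat \<Rightarrow> 'a) \<Rightarrow> bool" where
  "has_approx_F_points Ft x \<longleftrightarrow> (\<forall>k. \<exists>N. x N \<in> AF Ft k)"

definition explicitly_closed :: "'a::metric_space set \<Rightarrow> 'a set \<Rightarrow> (nat \<Rightarrow> 'a set) \<Rightarrow> bool" where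
  "explicitly_closed X F Ft \<longleftrightarrow>
     (\<forall>p\<in>X. (\<forall>N M::nat. AF Ft M \<inter> (cball p (1 / (real N + 1)) \<inter> X) \<noteq> {}) \<longrightarrow> p \<in> F)"

definition property_G :: "(real \<Rightarrow> real) \<Rightarrow> bool" where
  "property_G G \<longleftrightarrow> (\<forall>a::nat \<Rightarrow> real. (\<forall>n. a n \<ge> 0) \<longrightarrow> a \<longlonglongrightarrow> 0 \<longrightarrow> (\<lambda>n. G (a n)) \<longlonglongrightarrow> 0)"

definition property_H :: "(real \<Rightarrow> real) \<Rightarrow> bool" where
  "property_H H \<longleftrightarrow> (\<forall>a::nat \<Rightarrow> real. (\<forall>n. a n \<ge> 0) \<longrightarrow> (\<lambda>n. H (a n)) \<longlonglongrightarrow> 0 \<longrightarrow> a \<longlonglongrightarrow> 0)"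

definition GH_fejer_monotone ::
  "(real \<Rightarrow> real) \<Rightarrow> (real \<Rightarrow> real) \<Rightarrow> 'a::metric_space set \<Rightarrow> (nat \<Rightarrow> 'a) \<Rightarrow> bool" where
  "GH_fejer_monotone G H F x \<longleftrightarrow>
     (\<forall>n m. \<forall>p\<in>F. H (dist (x (n + m)) p) \<le> G (dist (x n) p))"

end

theory Submission
  imports Defs
begin

theorem proposition4p3:
  fixes X F :: "'a::metric_space set" and Ft :: "nat \<Rightarrow> 'a set"
    and G H :: "real \<Rightarrow> real" and x :: "nat \<Rightarrow> 'a"
  assumes "compact X"
    and "F \<noteq> {}" and "F \<subseteq> X"
    and "is_representation X F Ft"
    and "explicitly_closed X F Ft"
    and "\<And>t. t \<ge> 0 \<Longrightarrow> G t \<ge> 0"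
    and "\<And>t. t \<ge> 0 \<Longrightarrow> H t \<ge> 0"
    and "property_G G" and "property_H H"
    and "\<And>n. x n \<in> X"
    and "GH_fejer_monotone G H F x"
    and "has_approx_F_points Ft x"
  shows "\<exists>p\<in>F. x \<longlonglongrightarrow> p"
proof -
  obtain N where N: "\<And>k. x (N k) \<in> AF Ft k"
    using assms(12) unfolding has_approx_F_points_def by metis
  define y where "y = (\<lambda>k. x (N k))"
  have yX: "\<forall>k. y k \<in> X" using assms(10) by (simp add: y_def)
  have "seq_compact X" using assms(1) by (rule compact_imp_seq_compact)
  then obtain p r where pX: "p \<in> X" and r: "strict_mono r" and lim: "(y \<circ> r) \<longlonglongrightarrow> p"
    using yX unfolding seq_compact_def by metis
  have AFmono: "\<And>M k. M \<le> k \<Longrightarrow> AF Ft k \<subseteq> AF Ft M" by (auto simp: AF_def)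
  have pF: "p \<in> F"
  proof -
    have "AF Ft M \<inter> (cball p (1 / (real n + 1)) \<inter> X) \<noteq> {}" for n M
    proof -
      have e: "1 / (real n + 1) > 0" by simp
      have "eventually (\<lambda>j. dist ((y \<circ> r) j) p < 1 / (real n + 1) \<and> j \<ge> M) sequentially"
        using tendstoD[OF lim e] eventually_ge_at_top[of M] by (rule eventually_conj)
      then obtain j where j: "dist (y (r j)) p < 1 / (real n + 1)" "j \<ge> M"
        using eventually_happens[of _ sequentially] by auto
      have "r j \<ge> M" using j(2) seq_suble[OF r, of j] by linarith
      then have "y (r j) \<in> AF Ft M" using AFmono N y_def by blast
      moreover have "y (r j) \<in> cball p (1 / (real n + 1))"
        using j(1) by (simp add: dist_commute)
      ultimately show ?thesis using yX by blast
    qed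
    then show ?thesis using assms(5) pX unfolding explicitly_closed_def by blast
  qed
  define a where "a = (\<lambda>n. dist (x n) p)"
  have a0: "\<And>n. a n \<ge> 0" by (simp add: a_def)
  have "(\<lambda>j. a (N (r j))) \<longlonglongrightarrow> 0"
    using tendsto_dist_iff[THEN iffD1, OF lim] unfolding a_def y_def o_def by simp
  then have Gz: "(\<lambda>j. G (a (N (r j)))) \<longlonglongrightarrow> 0"
    using assms(8) a0 unfolding property_G_def by simp
  have Hz: "(\<lambda>n. H (a n)) \<longlonglongrightarrow> 0"
  proof (rule LIMSEQ_I)
    fix e :: real assume e: "e > 0"
    obtain j where j: "norm (G (a (N (r j))) - 0) < e"
      using LIMSEQ_D[OF Gz e] by blast
    show "\<exists>no. \<forall>n\<ge>no. norm (H (a n) - 0) < e"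
    proof (intro exI allI impI)
      fix n assume n: "n \<ge> N (r j)"
      have "H (a (N (r j) + (n - N (r j)))) \<le> G (a (N (r j)))"
        using assms(11) pF unfolding GH_fejer_monotone_def a_def by simp
      then have "H (a n) \<le> G (a (N (r j)))" using n by simp
      moreover have "H (a n) \<ge> 0" using assms(7)[OF a0] by simp
      ultimately show "norm (H (a n) - 0) < e" using j by simp
    qed
  qed
  then have "a \<longlonglongrightarrow> 0" using assms(9) a0 Hz unfolding property_H_def by simp
  then have "x \<longlonglongrightarrow> p" unfolding a_def by (rule tendsto_dist_iff[THEN iffD2])
  then show ?thesis using pF by blast
qed

end
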